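(* Let $\mathscr{U}$ be a normal ultrafilter over $\kappa$. Assume $2^\kappa=\lambda$ and that $\mathrm{Gal}(\mathscr{U},\partial,\partial)$ holds for every cardinal $\partial$ with $\kappa^+\leq\partial<\lambda$. Then there is a strong generating sequence $\mathcal{B}=\langle B_\alpha\mid\alpha<\lambda\rangle$ for $\mathscr{U}$.
   Context: $A\subseteq^*B$ means $A\setminus B$ is bounded in $\kappa$. A strong generating sequence for a filter $\mathcal{F}$ over $\kappa$ is a sequence $\langle B_\alpha\mid\alpha<\lambda\rangle$ of members of $\mathcal{F}$ which is $\subseteq^*$-decreasing ($\alpha\leq\beta$ implies $B_\beta\subseteq^*B_\alpha$) and such that for every $X\in\mathcal{F}$ there is $\alpha<\lambda$ with $B_\alpha\subseteq^*X$. $\mathrm{Gal}(\mathcal{F},\mu,\lambda)$: for every $\mathcal{C}\subseteq\mathcal{F}$ with $|\mathcal{C}|=\lambda$ there is $\mathcal{E}\subseteq\mathcal{C}$ with $|\mathcal{E}|=\mu$ and $\bigcap\mathcal{E}\in\mathcal{F}$. *)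

theory Defs
  imports Main
begin

text \<open>The cardinal kappa is represented by a cardinal (initial-ordinal) well-order r
  on its carrier Field r; the ordinal order of kappa is r.\<close>

definition bounded_in :: "'k rel \<Rightarrow> 'k set \<Rightarrow> bool" where
  "bounded_in r A \<longleftrightarrow> A \<subseteq> Field r \<and> (\<exists>\<beta>\<in>Field r. \<forall>\<alpha>\<in>A. (\<alpha>, \<beta>) \<in> r \<and> \<alpha> \<noteq> \<beta>)"

definition almost_subset :: "'k rel \<Rightarrow> 'k set \<Rightarrow> 'k set \<Rightarrow> bool" where
  "almost_subset r A B \<longleftrightarrow> bounded_in r (A - B)"

definition ultrafilter_on :: "'k set \<Rightarrow> 'k set set \<Rightarrow> bool" where
  "ultrafilter_on K U \<longleftrightarrow>
     U \<subseteq> Pow K \<and> K \<in> U \<and> {} \<notin> U \<and>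
     (\<forall>X\<in>U. \<forall>Y. X \<subseteq> Y \<and> Y \<subseteq> K \<longrightarrow> Y \<in> U) \<and>
     (\<forall>X\<in>U. \<forall>Y\<in>U. X \<inter> Y \<in> U) \<and>
     (\<forall>X. X \<subseteq> K \<longrightarrow> X \<in> U \<or> K - X \<in> U)"

definition kappa_complete :: "'k rel \<Rightarrow> 'k set set \<Rightarrow> bool" where
  "kappa_complete r U \<longleftrightarrow>
     (\<forall>F. F \<subseteq> U \<and> F \<noteq> {} \<and> (card_of F, card_of (Field r)) \<in> ordLess \<longrightarrow> \<Inter>F \<in> U)"

definition nonprincipal :: "'k rel \<Rightarrow> 'k set set \<Rightarrow> bool" where
  "nonprincipal r U \<longleftrightarrow> (\<forall>\<alpha>\<in>Field r. {\<alpha>} \<notin> U)"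

definition diag_inter :: "'k rel \<Rightarrow> ('k \<Rightarrow> 'k set) \<Rightarrow> 'k set" where
  "diag_inter r X = {\<alpha> \<in> Field r. \<forall>\<beta>. (\<beta>, \<alpha>) \<in> r \<and> \<beta> \<noteq> \<alpha> \<longrightarrow> \<alpha> \<in> X \<beta>}"

definition normal_ultrafilter :: "'k rel \<Rightarrow> 'k set set \<Rightarrow> bool" where
  "normal_ultrafilter r U \<longleftrightarrow>
     Card_order r \<and> ultrafilter_on (Field r) U \<and> kappa_complete r U \<and> nonprincipal r U \<and>
     (\<forall>X. (\<forall>\<beta>\<in>Field r. X \<beta> \<in> U) \<longrightarrow> diag_inter r X \<in> U)"

definition Gal :: "'k set set \<Rightarrow> 'a rel \<Rightarrow> 'b rel \<Rightarrow> bool" where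
  "Gal U mu lam \<longleftrightarrow>
     (\<forall>C. C \<subseteq> U \<and> (card_of C, lam) \<in> ordIso \<longrightarrow>
        (\<exists>E. E \<subseteq> C \<and> (card_of E, mu) \<in> ordIso \<and> \<Inter>E \<in> U))"

definition strong_generating_seq :: "'k rel \<Rightarrow> 'k set set \<Rightarrow> 'l rel \<Rightarrow> ('l \<Rightarrow> 'k set) \<Rightarrow> bool" where
  "strong_generating_seq r U l B \<longleftrightarrow>
     (\<forall>\<alpha>\<in>Field l. B \<alpha> \<in> U) \<and>
     (\<forall>\<alpha>\<in>Field l. \<forall>\<beta>\<in>Field l. (\<alpha>, \<beta>) \<in> l \<longrightarrow> almost_subset r (B \<beta>) (B \<alpha>)) \<and>
     (\<forall>X\<in>U. \<exists>\<alpha>\<in>Field l. almost_subset r (B \<alpha>) X)"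

end

theory Submission
  imports Defs
begin

unbundle cardinal_syntax

lemma wo_props:
  assumes "Well_order w"
  shows "x \<in> Field w \<Longrightarrow> (x,x) \<in> w"
    and "(x,y) \<in> w \<Longrightarrow> (y,z) \<in> w \<Longrightarrow> (x,z) \<in> w"
    and "(x,y) \<in> w \<Longrightarrow> (y,x) \<in> w \<Longrightarrow> x = y"
    and "x \<in> Field w \<Longrightarrow> y \<in> Field w \<Longrightarrow> x \<noteq> y \<Longrightarrow> (x,y) \<in> w \<or> (y,x) \<in> w"
  using assms unfolding well_order_on_def linear_order_on_def partial_order_on_def
    preorder_on_def refl_on_def trans_def antisym_def total_on_def
  by blast+

lemma bounded_mono: "A \<subseteq> A' \<Longrightarrow> bounded_in r A' \<Longrightarrow> bounded_in r A"
  unfolding bounded_in_def by blast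

lemma asub_subset: "A \<subseteq> A' \<Longrightarrow> almost_subset r A' C \<Longrightarrow> almost_subset r A C"
  unfolding almost_subset_def using bounded_mono[of "A - C" "A' - C" r] by blast

lemma asub_refl: "Field r \<noteq> {} \<Longrightarrow> almost_subset r A A"
  unfolding almost_subset_def bounded_in_def by auto

lemma asub_of_subset: "Field r \<noteq> {} \<Longrightarrow> A \<subseteq> B \<Longrightarrow> almost_subset r A B"
  using asub_refl asub_subset by metis

lemma bound_step:
  assumes "Well_order r" "\<forall>a\<in>A. (a,b1) \<in> r \<and> a \<noteq> b1" "(b1,b2) \<in> r"
  shows "\<forall>a\<in>A. (a,b2) \<in> r \<and> a \<noteq> b2"
proof
  fix a assume a: "a \<in> A"
  then have 1: "(a,b1) \<in> r" "a \<noteq> b1" using assms(2) by blast+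
  have "(a,b2) \<in> r" using wo_props(2)[OF assms(1) 1(1) assms(3)] .
  moreover have "a \<noteq> b2"
  proof
    assume "a = b2"
    then have "(b1,a) \<in> r" using assms(3) by simp
    then show False using wo_props(3)[OF assms(1) 1(1)] 1(2) by blast
  qed
  ultimately show "(a,b2) \<in> r \<and> a \<noteq> b2" by blast
qed

lemma bounded_Un:
  assumes "Well_order r" "bounded_in r A" "bounded_in r B"
  shows "bounded_in r (A \<union> B)"
proof -
  obtain b1 where b1: "b1 \<in> Field r" "\<forall>a\<in>A. (a,b1) \<in> r \<and> a \<noteq> b1" "A \<subseteq> Field r"
    using assms(2) unfolding bounded_in_def by blast
  obtain b2 where b2: "b2 \<in> Field r" "\<forall>a\<in>B. (a,b2) \<in> r \<and> a \<noteq> b2" "B \<subseteq> Field r"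
    using assms(3) unfolding bounded_in_def by blast
  note W = wo_props[OF assms(1)]
  show ?thesis
  proof (cases "(b1,b2) \<in> r")
    case True
    have "\<forall>a\<in>A. (a,b2) \<in> r \<and> a \<noteq> b2" using bound_step[OF assms(1) b1(2) True] .
    then have "\<forall>a\<in>A \<union> B. (a,b2) \<in> r \<and> a \<noteq> b2" using b2(2) by blast
    then show ?thesis using b1 b2 unfolding bounded_in_def by blast
  next
    case False
    then have "(b2,b1) \<in> r" using W(1,4) b1(1) b2(1) by metis
    then have "\<forall>a\<in>B. (a,b1) \<in> r \<and> a \<noteq> b1" using bound_step[OF assms(1) b2(2)] by blast
    then have "\<forall>a\<in>A \<union> B. (a,b1) \<in> r \<and> a \<noteq> b1" using b1(2) by blast
    then show ?thesis using b1 b2 unfolding bounded_in_def by blast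
  qed
qed

lemma asub_trans:
  assumes "Well_order r" "almost_subset r A B" "almost_subset r B C"
  shows "almost_subset r A C"
proof -
  have "bounded_in r ((A - B) \<union> (B - C))"
    using bounded_Un assms unfolding almost_subset_def by blast
  then show ?thesis unfolding almost_subset_def
    using bounded_mono[of "A - C" "(A - B) \<union> (B - C)" r] by blast
qed

lemma bounded_below:
  assumes "Card_order r" "infinite (Field r)" "g \<in> Field r"
  shows "bounded_in r {a \<in> Field r. (a,g) \<in> r}"
proof -
  obtain b where b: "b \<in> Field r" "g \<noteq> b" "(g,b) \<in> r"
    using infinite_Card_order_limit[OF assms] by blast
  have W: "Well_order r" using assms(1) card_order_on_well_order_on by blast
  note WW = wo_props[OF W]
  have "\<forall>a\<in>{a \<in> Field r. (a,g) \<in> r}. (a,b) \<in> r \<and> a \<noteq> b"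
  proof
    fix a assume "a \<in> {a \<in> Field r. (a,g) \<in> r}"
    then have ag: "(a,g) \<in> r" by blast
    have "(a,b) \<in> r" using WW(2)[OF ag b(3)] .
    moreover have "a \<noteq> b"
    proof
      assume "a = b"
      then have "(b,g) \<in> r" using ag by simp
      then show False using WW(3)[OF b(3)] b(2) by blast
    qed
    ultimately show "(a,b) \<in> r \<and> a \<noteq> b" by blast
  qed
  then show ?thesis unfolding bounded_in_def using b by blast
qed

lemma fin_inter:
  assumes "ultrafilter_on K U" "finite F" "F \<noteq> {}" "F \<subseteq> U"
  shows "\<Inter>F \<in> U"
  using assms(2,3,4)
proof (induction F rule: finite_ne_induct)
  case (singleton x) then show ?case by simp
next
  case (insert x F)
  then show ?case using assms(1) unfolding ultrafilter_on_def by simp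
qed

lemma nu_basic:
  assumes "normal_ultrafilter r U"
  shows "Field r \<noteq> {}" "infinite (Field r)" "Well_order r" "Card_order r"
    "ultrafilter_on (Field r) U"
proof -
  have UF: "ultrafilter_on (Field r) U" and NP: "nonprincipal r U" and C: "Card_order r"
    using assms unfolding normal_ultrafilter_def by blast+
  show "ultrafilter_on (Field r) U" "Card_order r" by fact+
  show "Well_order r" using C card_order_on_well_order_on by blast
  show ne: "Field r \<noteq> {}" using UF unfolding ultrafilter_on_def by auto
  show "infinite (Field r)"
  proof
    assume fin: "finite (Field r)"
    let ?F = "(\<lambda>a. Field r - {a}) ` Field r"
    have "?F \<subseteq> U"
    proof
      fix X assume "X \<in> ?F"
      then obtain a where a: "a \<in> Field r" "X = Field r - {a}" by blast
      have "{a} \<notin> U" using NP a unfolding nonprincipal_def by blast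
      then show "X \<in> U" using UF a unfolding ultrafilter_on_def by blast
    qed
    moreover have "\<Inter>?F = {}" using ne by auto
    ultimately have "{} \<in> U" using fin_inter[OF UF, of ?F] fin ne by fastforce
    then show False using UF unfolding ultrafilter_on_def by blast
  qed
qed

lemma pseudo:
  fixes r :: "'k rel" and U :: "'k set set" and l :: "'l rel" and A :: "'l set"
    and B :: "'l \<Rightarrow> 'k set"
  assumes NU: "normal_ultrafilter r U" and CL: "Card_order l"
    and LP: "(l, card_of (Pow (Field r))) \<in> ordIso"
    and GAL: "\<forall>d :: 'k set rel. Card_order d \<and> (cardSuc r, d) \<in> ordLeq \<and> (d, l) \<in> ordLess
           \<longrightarrow> Gal U d d"
    and AF: "A \<subseteq> Field l" and AS: "|A| <o l"
    and BU: "\<forall>i\<in>A. B i \<in> U"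
    and DEC: "\<forall>i\<in>A. \<forall>j\<in>A. (i,j) \<in> l \<longrightarrow> almost_subset r (B j) (B i)"
  shows "\<exists>D\<in>U. \<forall>i\<in>A. almost_subset r D (B i)"
proof -
  note nb = nu_basic[OF NU]
  have WOl: "Well_order l" using CL card_order_on_well_order_on by blast
  note Wl = wo_props[OF WOl]
  note Wr = wo_props[OF nb(3)]
  let ?cof = "\<lambda>K. K \<subseteq> A \<and> (\<forall>i\<in>A. \<exists>j\<in>K. (i,j) \<in> l)"
  have cofA: "?cof A" using AF Wl(1) by blast
  have ne: "{|K| | K. ?cof K} \<noteq> {}" using cofA by blast
  have allc: "\<forall>x \<in> {|K| | K. ?cof K}. Card_order x" using card_of_Card_order by blast
  obtain J0c where J0c: "J0c \<in> {|K| | K. ?cof K}" "\<forall>r' \<in> {|K| | K. ?cof K}. J0c \<le>o r'"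
    using exists_minim_Card_order[OF ne allc] by blast
  from J0c(1) obtain J0 where J0: "?cof J0" and J0e: "J0c = |J0|" by blast
  have J0min: "\<forall>K. ?cof K \<longrightarrow> |J0| \<le>o |K|"
  proof (intro allI impI)
    fix K assume "?cof K"
    then have "|K| \<in> {|K| | K. ?cof K}" by blast
    then show "|J0| \<le>o |K|" using J0c(2) J0e by blast
  qed
  define c where "c = |J0|"
  have Fc: "Field c = J0" unfolding c_def by (rule Field_card_of)
  have Cc: "Card_order c" unfolding c_def by (rule card_of_Card_order)
  have WOc: "Well_order c" using Cc card_order_on_well_order_on by blast
  note Wc = wo_props[OF WOc]
  define R where "R = {x\<in>J0. \<forall>y. (y,x) \<in> c \<and> y \<noteq> x \<longrightarrow> (y,x) \<in> l \<and> y \<noteq> x}"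
  have Rcof: "?cof R"
  proof -
    have "R \<subseteq> A" using J0 unfolding R_def by blast
    moreover have "\<exists>j\<in>R. (i,j) \<in> l" if iA: "i \<in> A" for i
    proof -
      let ?S = "{x\<in>J0. (i,x) \<in> l}"
      obtain x0 where "x0 \<in> ?S" using J0 iA by blast
      moreover have wfc: "wf (c - Id)" using wo_rel.WF[of c] WOc unfolding wo_rel_def by blast
      ultimately obtain z where z: "z \<in> ?S" and zmin: "\<forall>y. (y,z) \<in> c - Id \<longrightarrow> y \<notin> ?S"
        using wfE_min[OF wfc, of x0 ?S] by blast
      have "\<forall>y. (y,z) \<in> c \<and> y \<noteq> z \<longrightarrow> (y,z) \<in> l \<and> y \<noteq> z"
      proof (intro allI impI)
        fix y assume y: "(y,z) \<in> c \<and> y \<noteq> z"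
        then have yJ: "y \<in> J0" using Fc unfolding Field_def by blast
        have "(i,y) \<notin> l" using zmin y yJ by blast
        moreover have "i \<in> Field l" "y \<in> Field l" using iA yJ J0 AF by blast+
        ultimately have "(y,i) \<in> l" "y \<noteq> i" using Wl(1,4) by blast+
        then show "(y,z) \<in> l \<and> y \<noteq> z" using z Wl(2) \<open>(i,y) \<notin> l\<close> by blast
      qed
      then have "z \<in> R" unfolding R_def using z by blast
      then show ?thesis using z by blast
    qed
    ultimately show ?thesis by blast
  qed
  have RJ0: "R \<subseteq> J0" unfolding R_def by blast
  have J0R: "|J0| \<le>o |R|" using J0min Rcof by blast
  have Rmin: "\<forall>K. ?cof K \<longrightarrow> |R| \<le>o |K|"
  proof (intro allI impI)
    fix K assume "?cof K"
    then have "|J0| \<le>o |K|" using J0min by blast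
    then show "|R| \<le>o |K|" using ordLeq_transitive[OF card_of_mono1[OF RJ0]] by blast
  qed
  have Rseg: "|{y\<in>R. (y,x) \<in> l \<and> y \<noteq> x}| <o |R|" if xR: "x \<in> R" for x
  proof -
    have "{y\<in>R. (y,x) \<in> l \<and> y \<noteq> x} \<subseteq> underS c x"
    proof
      fix y assume y: "y \<in> {y\<in>R. (y,x) \<in> l \<and> y \<noteq> x}"
      have "y \<in> Field c" "x \<in> Field c" using y xR RJ0 Fc by blast+
      moreover have "(x,y) \<notin> c"
      proof
        assume "(x,y) \<in> c"
        then have "(x,y) \<in> l" using y unfolding R_def by blast
        then show False using y Wl(3) by blast
      qed
      ultimately have "(y,x) \<in> c" using Wc(4) y by blast
      then show "y \<in> underS c x" using y unfolding underS_def by blast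
    qed
    then have "|{y\<in>R. (y,x) \<in> l \<and> y \<noteq> x}| \<le>o |underS c x|" by (rule card_of_mono1)
    moreover have "|underS c x| <o c" using card_of_underS[OF Cc] xR RJ0 Fc by blast
    ultimately have "|{y\<in>R. (y,x) \<in> l \<and> y \<noteq> x}| <o |J0|" unfolding c_def
      by (rule ordLeq_ordLess_trans)
    then show ?thesis using J0R by (rule ordLess_ordLeq_trans)
  qed
  show ?thesis
  proof (cases "|Field r| <o |R|")
    case False
    show ?thesis
    proof (cases "R = {}")
      case True
      then have "A = {}" using Rcof by blast
      moreover have "Field r \<in> U" using nb(5) by (simp add: ultrafilter_on_def)
      ultimately show ?thesis by blast
    next
      case Rne: False
      have "|R| \<le>o |Field r|"
        using not_ordLess_iff_ordLeq[OF card_of_Well_order[of R] card_of_Well_order[of "Field r"]] False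
        by simp
      then obtain g where g: "g ` Field r = R" using card_of_ordLeq2[OF Rne, of "Field r"] by blast
      define D where "D = diag_inter r (\<lambda>\<gamma>. B (g \<gamma>))"
      have norm: "\<forall>X. (\<forall>\<beta>\<in>Field r. X \<beta> \<in> U) \<longrightarrow> diag_inter r X \<in> U"
        using conjunct2[OF conjunct2[OF conjunct2[OF conjunct2[OF NU[unfolded normal_ultrafilter_def]]]]] .
      have RA0: "R \<subseteq> A" using Rcof by blast
      have "\<forall>\<beta>\<in>Field r. B (g \<beta>) \<in> U"
      proof
        fix b assume "b \<in> Field r"
        then have "g b \<in> A" using g RA0 by blast
        then show "B (g b) \<in> U" using BU by blast
      qed
      moreover have "(\<forall>\<beta>\<in>Field r. (\<lambda>\<gamma>. B (g \<gamma>)) \<beta> \<in> U) \<longrightarrow> diag_inter r (\<lambda>\<gamma>. B (g \<gamma>)) \<in> U"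
        using norm by (rule spec)
      ultimately have "D \<in> U" unfolding D_def by simp
      moreover have "almost_subset r D (B i)" if iA: "i \<in> A" for i
      proof -
        obtain j where j: "j \<in> R" "(i,j) \<in> l" using Rcof iA by blast
        then obtain \<gamma> where ga: "\<gamma> \<in> Field r" "g \<gamma> = j" using g by blast
        have "D - B j \<subseteq> {a \<in> Field r. (a,\<gamma>) \<in> r}"
        proof
          fix a assume a: "a \<in> D - B j"
          then have aF: "a \<in> Field r" unfolding D_def diag_inter_def by blast
          show "a \<in> {a \<in> Field r. (a,\<gamma>) \<in> r}"
          proof (rule ccontr)
            assume "a \<notin> {a \<in> Field r. (a,\<gamma>) \<in> r}"
            then have "(a,\<gamma>) \<notin> r" using aF by blast
            moreover have "\<gamma> \<noteq> a" using \<open>(a,\<gamma>) \<notin> r\<close> Wr(1) aF by blast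
            ultimately have "(\<gamma>,a) \<in> r" using Wr(4)[OF ga(1) aF] by blast
            then have "a \<in> B (g \<gamma>)" using a \<open>\<gamma> \<noteq> a\<close> unfolding D_def diag_inter_def by blast
            then have "a \<in> B j" using ga by simp
            then show False using a by blast
          qed
        qed
        then have "almost_subset r D (B j)"
          unfolding almost_subset_def by (rule bounded_mono[OF _ bounded_below[OF nb(4) nb(2) ga(1)]])
        moreover have "almost_subset r (B j) (B i)" using DEC iA j RA0 by blast
        ultimately show ?thesis by (rule asub_trans[OF nb(3)])
      qed
      ultimately show ?thesis by blast
    qed
  next
    case True
    have "R \<subseteq> A" using Rcof by blast
    then have RA: "|R| \<le>o |A|" by (rule card_of_mono1)
    have Rl: "|R| <o l" using ordLeq_ordLess_trans[OF RA AS] .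
    have "|R| \<le>o |Pow (Field r)|"
      using ordLess_imp_ordLeq[OF ordLess_ordIso_trans[OF Rl LP]] .
    then obtain f where f: "inj_on f R" "f ` R \<subseteq> Pow (Field r)"
      using card_of_ordLeq[of R "Pow (Field r)"] by auto
    define S where "S = f ` R"
    have SR: "|S| =o |R|" unfolding S_def
    proof -
      have "bij_betw f R (f ` R)" using f(1) by (rule inj_on_imp_bij_betw)
      then have "|R| =o |f ` R|" by (rule card_of_ordIsoI)
      then show "|f ` R| =o |R|" by (rule ordIso_symmetric)
    qed
    define d where "d = |S|"
    have Cd: "Card_order d" unfolding d_def by (rule card_of_Card_order)
    have "r <o d"
    proof -
      have "r =o |Field r|" using ordIso_symmetric[OF card_of_Field_ordIso[OF nb(4)]] .
      then have "r <o |R|" using ordIso_ordLess_trans True by blast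
      then show ?thesis unfolding d_def using ordLess_ordIso_trans[OF _ ordIso_symmetric[OF SR]] by blast
    qed
    then have "cardSuc r \<le>o d" using cardSuc_least[OF nb(4) Cd] by blast
    moreover have "d <o l" unfolding d_def using ordIso_ordLess_trans[OF SR Rl] .
    ultimately have G: "Gal U d d" using GAL Cd by blast
    let ?C = "B ` R"
    have CU: "?C \<subseteq> U" using BU Rcof by blast
    show ?thesis
    proof (cases "|?C| <o |R|")
      case False
      have "|?C| <o |R| \<or> |?C| =o |R|"
        using card_of_image[of B R] ordLeq_iff_ordLess_or_ordIso[of "|?C|" "|R|"] by simp
      then have "|?C| =o |R|" using False by blast
      then have "|?C| =o d" unfolding d_def using ordIso_transitive[OF _ ordIso_symmetric[OF SR]] by blast
      have GG: "\<forall>C. C \<subseteq> U \<and> |C| =o d \<longrightarrow> (\<exists>E. E \<subseteq> C \<and> |E| =o d \<and> \<Inter>E \<in> U)"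
        using G unfolding Gal_def by blast
      obtain E where E: "E \<subseteq> ?C" "|E| =o d" "\<Inter>E \<in> U"
        using GG[rule_format, of ?C] CU \<open>|?C| =o d\<close> by blast
      have "almost_subset r (\<Inter>E) (B i)" if iA: "i \<in> A" for i
      proof -
        obtain j0 where j0: "j0 \<in> R" "(i,j0) \<in> l" using Rcof iA by blast
        have "\<exists>j\<in>R. (i,j) \<in> l \<and> B j \<in> E"
        proof (rule ccontr)
          assume nex: "\<not> ?thesis"
          have "E \<subseteq> B ` {y\<in>R. (y,j0) \<in> l \<and> y \<noteq> j0}"
          proof
            fix e assume e: "e \<in> E"
            then obtain y where y: "y \<in> R" "e = B y" using E(1) by blast
            then have "(i,y) \<notin> l" using nex e by blast
            moreover have "i \<in> Field l" "y \<in> Field l" using iA y Rcof AF by blast+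
            ultimately have "(y,i) \<in> l" "y \<noteq> i" using Wl(1,4) by blast+
            then have "(y,j0) \<in> l" "y \<noteq> j0" using j0 Wl(2) \<open>(i,y) \<notin> l\<close> by blast+
            then show "e \<in> B ` {y\<in>R. (y,j0) \<in> l \<and> y \<noteq> j0}" using y by blast
          qed
          then have "|E| \<le>o |B ` {y\<in>R. (y,j0) \<in> l \<and> y \<noteq> j0}|" by (rule card_of_mono1)
          then have "|E| \<le>o |{y\<in>R. (y,j0) \<in> l \<and> y \<noteq> j0}|"
            using ordLeq_transitive[OF _ card_of_image] by blast
          then have "|E| <o |R|" using ordLeq_ordLess_trans[OF _ Rseg[OF j0(1)]] by blast
          then have "|E| <o d" unfolding d_def using ordLess_ordIso_trans[OF _ ordIso_symmetric[OF SR]] by blast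
          then show False using E(2) not_ordLess_ordIso by blast
        qed
        then obtain j where j: "j \<in> R" "(i,j) \<in> l" "B j \<in> E" by blast
        have "almost_subset r (\<Inter>E) (B j)" using asub_of_subset[OF nb(1)] j(3) by blast
        moreover have "almost_subset r (B j) (B i)" using DEC iA j Rcof by blast
        ultimately show ?thesis using asub_trans nb(3) by blast
      qed
      then show ?thesis using E(3) by blast
    next
      case True
      have "\<exists>x\<in>?C. \<forall>j\<in>R. \<exists>j'\<in>R. (j,j') \<in> l \<and> B j' = x"
      proof (rule ccontr)
        assume nt: "\<not> ?thesis"
        have "\<forall>x\<in>?C. \<exists>j. j \<in> R \<and> (\<forall>j'\<in>R. (j,j') \<in> l \<longrightarrow> B j' \<noteq> x)"
        proof
          fix x assume xC: "x \<in> ?C"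
          then have "\<not> (\<forall>j\<in>R. \<exists>j'\<in>R. (j,j') \<in> l \<and> B j' = x)" using nt by blast
          then show "\<exists>j. j \<in> R \<and> (\<forall>j'\<in>R. (j,j') \<in> l \<longrightarrow> B j' \<noteq> x)" by blast
        qed
        from bchoice[OF this] obtain h where h: "\<forall>x\<in>?C. h x \<in> R \<and> (\<forall>j'\<in>R. (h x,j') \<in> l \<longrightarrow> B j' \<noteq> x)"
          by blast
        have "?cof (h ` ?C)"
        proof -
          have RA': "R \<subseteq> A" using Rcof by blast
          have "h ` ?C \<subseteq> R" using h by blast
          then have "h ` ?C \<subseteq> A" using RA' by (rule subset_trans)
          moreover have "\<exists>j\<in>h ` ?C. (i,j) \<in> l" if iA: "i \<in> A" for i
          proof -
            obtain j where j: "j \<in> R" "(i,j) \<in> l" using Rcof iA by blast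
            have BjC: "B j \<in> ?C" using j(1) by (rule imageI)
            have hj: "h (B j) \<in> R" "(h (B j), j) \<notin> l" using h BjC j(1) by auto
            have jF: "j \<in> Field l" "h (B j) \<in> Field l" using hj(1) j(1) RA' AF by auto
            have jne: "j \<noteq> h (B j)" using hj(2) Wl(1)[OF jF(1)] by auto
            have "(j, h (B j)) \<in> l" using Wl(4)[OF jF jne] hj(2) by blast
            then have "(i, h (B j)) \<in> l" using Wl(2)[OF j(2)] by blast
            moreover have "h (B j) \<in> h ` ?C" using BjC by (rule imageI)
            ultimately show ?thesis by blast
          qed
          ultimately show ?thesis by (intro conjI) auto
        qed
        then have "|R| \<le>o |h ` ?C|" by (rule Rmin[rule_format])
        moreover have "|h ` ?C| <o |R|" using ordLeq_ordLess_trans[OF card_of_image True] .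
        ultimately show False using not_ordLess_ordLeq[of "|h ` ?C|" "|R|"] by blast
      qed
      then obtain x where x: "x \<in> ?C" "\<forall>j\<in>R. \<exists>j'\<in>R. (j,j') \<in> l \<and> B j' = x" by blast
      have "almost_subset r x (B i)" if iA: "i \<in> A" for i
      proof -
        obtain j where j: "j \<in> R" "(i,j) \<in> l" using Rcof iA by blast
        then obtain j' where j': "j' \<in> R" "(j,j') \<in> l" "B j' = x" using x by blast
        have "(i,j') \<in> l" using Wl(2)[OF j(2) j'(2)] .
        moreover have "j' \<in> A" using j'(1) Rcof by blast
        ultimately have "almost_subset r (B j') (B i)" using DEC iA by blast
        then show ?thesis using j'(3) by simp
      qed
      then show ?thesis using x CU by blast
    qed
  qed
qed

theorem proposition5p7:
  fixes r :: "'k rel" and U :: "'k set set" and l :: "'l rel"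
  assumes "normal_ultrafilter r U"
    and "Card_order l"
    and "(l, card_of (Pow (Field r))) \<in> ordIso"
    and "\<forall>d :: 'k set rel. Card_order d \<and> (cardSuc r, d) \<in> ordLeq \<and> (d, l) \<in> ordLess
           \<longrightarrow> Gal U d d"
  shows "\<exists>B :: 'l \<Rightarrow> 'k set. strong_generating_seq r U l B"
proof -
  note nb = nu_basic[OF assms(1)]
  have WOl: "Well_order l" using assms(2) card_order_on_well_order_on by blast
  note Wl = wo_props[OF WOl]
  have wf: "wf (l - Id)" using wo_rel.WF[of l] WOl unfolding wo_rel_def by blast
  have FrU: "Field r \<in> U" using nb(5) by (simp add: ultrafilter_on_def)
  have UP: "U \<subseteq> Pow (Field r)" using nb(5) by (simp add: ultrafilter_on_def)
  have Uint: "\<forall>X\<in>U. \<forall>Y\<in>U. X \<inter> Y \<in> U" using nb(5) by (simp add: ultrafilter_on_def)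
  have "|U| \<le>o |Pow (Field r)|" using UP by (rule card_of_mono1)
  moreover have "|Pow (Field r)| =o l" using ordIso_symmetric[OF assms(3)] .
  moreover have "l =o |Field l|" using ordIso_symmetric[OF card_of_Field_ordIso[OF assms(2)]] .
  ultimately have "|U| \<le>o |Field l|"
    using ordLeq_ordIso_trans ordIso_transitive by blast
  moreover have "U \<noteq> {}" using FrU by blast
  ultimately obtain X where X: "X ` Field l = U" using card_of_ordLeq2[of U "Field l"] by blast
  define F where "F = (\<lambda>(g::'l \<Rightarrow> 'k set) \<alpha>. SOME D. D \<in> U \<and> (\<forall>\<beta>. (\<beta>,\<alpha>) \<in> l - Id \<longrightarrow> almost_subset r D (g \<beta>))
      \<and> almost_subset r D (X \<alpha>))"
  define B where "B = wfrec (l - Id) F"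
  have Beq: "B \<alpha> = (SOME D. D \<in> U \<and> (\<forall>\<beta>. (\<beta>,\<alpha>) \<in> l - Id \<longrightarrow> almost_subset r D (B \<beta>))
      \<and> almost_subset r D (X \<alpha>))" for \<alpha>
  proof -
    have "B \<alpha> = F (cut B (l - Id) \<alpha>) \<alpha>" unfolding B_def by (rule wfrec[OF wf])
    also have "\<dots> = (SOME D. D \<in> U \<and> (\<forall>\<beta>. (\<beta>,\<alpha>) \<in> l - Id \<longrightarrow> almost_subset r D (B \<beta>))
      \<and> almost_subset r D (X \<alpha>))"
      unfolding F_def cut_def by simp
    finally show ?thesis .
  qed
  let ?Q = "\<lambda>\<alpha>. B \<alpha> \<in> U \<and> (\<forall>\<beta>. (\<beta>,\<alpha>) \<in> l - Id \<longrightarrow> almost_subset r (B \<alpha>) (B \<beta>))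
      \<and> almost_subset r (B \<alpha>) (X \<alpha>)"
  have P: "\<alpha> \<in> Field l \<Longrightarrow> ?Q \<alpha>" for \<alpha>
  proof (induction \<alpha> rule: wf_induct_rule[OF wf])
    case (1 \<alpha>)
    let ?A = "underS l \<alpha>"
    have Aeq: "\<beta> \<in> ?A \<longleftrightarrow> (\<beta>,\<alpha>) \<in> l - Id" for \<beta> unfolding underS_def by blast
    have AF: "?A \<subseteq> Field l" unfolding underS_def Field_def by blast
    have AS: "|?A| <o l" by (rule card_of_underS[OF assms(2) 1(2)])
    have IH: "?Q \<beta>" if "\<beta> \<in> ?A" for \<beta>
    proof -
      have "(\<beta>,\<alpha>) \<in> l - Id" using that Aeq by blast
      moreover then have "\<beta> \<in> Field l" unfolding Field_def by blast
      ultimately show ?thesis using 1(1) by blast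
    qed
    have BU: "\<forall>i\<in>?A. B i \<in> U" using IH by blast
    have DEC: "\<forall>i\<in>?A. \<forall>j\<in>?A. (i,j) \<in> l \<longrightarrow> almost_subset r (B j) (B i)"
    proof (intro ballI impI)
      fix i j assume ij: "i \<in> ?A" "j \<in> ?A" "(i,j) \<in> l"
      show "almost_subset r (B j) (B i)"
      proof (cases "i = j")
        case True then show ?thesis using asub_refl[OF nb(1)] by simp
      next
        case False
        then have "(i,j) \<in> l - Id" using ij(3) by blast
        then show ?thesis using IH[OF ij(2)] by blast
      qed
    qed
    obtain D where D: "D \<in> U" "\<forall>i\<in>?A. almost_subset r D (B i)"
      using pseudo[OF assms(1) assms(2) assms(3) assms(4) AF AS BU DEC] by blast
    have XU: "X \<alpha> \<in> U" using X 1(2) by blast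
    let ?D = "D \<inter> X \<alpha>"
    have "?D \<in> U" using Uint D(1) XU by blast
    moreover have "\<forall>\<beta>. (\<beta>,\<alpha>) \<in> l - Id \<longrightarrow> almost_subset r ?D (B \<beta>)"
    proof (intro allI impI)
      fix \<beta> assume "(\<beta>,\<alpha>) \<in> l - Id"
      then have "almost_subset r D (B \<beta>)" using D(2) Aeq by blast
      then show "almost_subset r ?D (B \<beta>)" by (rule asub_subset[OF Int_lower1])
    qed
    moreover have "almost_subset r ?D (X \<alpha>)" by (rule asub_of_subset[OF nb(1) Int_lower2])
    ultimately have ex: "\<exists>D. D \<in> U \<and> (\<forall>\<beta>. (\<beta>,\<alpha>) \<in> l - Id \<longrightarrow> almost_subset r D (B \<beta>))
      \<and> almost_subset r D (X \<alpha>)" by blast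
    show ?case unfolding Beq[of \<alpha>] by (rule someI_ex[OF ex])
  qed
  have "strong_generating_seq r U l B"
    unfolding strong_generating_seq_def
  proof (intro conjI ballI impI)
    fix \<alpha> assume "\<alpha> \<in> Field l"
    then show "B \<alpha> \<in> U" using P by blast
  next
    fix \<alpha> \<beta> assume ab: "\<alpha> \<in> Field l" "\<beta> \<in> Field l" "(\<alpha>, \<beta>) \<in> l"
    show "almost_subset r (B \<beta>) (B \<alpha>)"
    proof (cases "\<alpha> = \<beta>")
      case True then show ?thesis using asub_refl[OF nb(1)] by simp
    next
      case False
      then have "(\<alpha>,\<beta>) \<in> l - Id" using ab(3) by blast
      then show ?thesis using P[OF ab(2)] by blast
    qed
  next
    fix Y assume "Y \<in> U"
    then obtain \<alpha> where a: "\<alpha> \<in> Field l" "Y = X \<alpha>" using X by blast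
    then have "almost_subset r (B \<alpha>) Y" using P[OF a(1)] by blast
    then show "\<exists>\<alpha>\<in>Field l. almost_subset r (B \<alpha>) Y" using a(1) by blast
  qed
  then show ?thesis by blast
qed

end
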